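(* Let $M\ge1$ users be located at $(x_m,y_m,0)$, $1\le m\le M$, with $-\frac{D_{\rm L}}{2}\le x_m\le \frac{D_{\rm L}}{2}$ and $-\frac{D_{\rm W}}{2}\le y_m\le\frac{D_{\rm W}}{2}$, and let an antenna be placed at $(x,0,d)$, $d>0$. With $\eta>0,\sigma^2>0$ define $R_m^{\rm OMA}=\frac{1}{M}\log\left(1+\frac{\eta P_m}{\sigma^2((x-x_m)^2+y_m^2+d^2)}\right)$. For a target rate $R>0$ consider $$\min_{P_1,\dots,P_M,\ x}\ \sum_{m=1}^M P_m\quad\text{s.t.}\quad R_m^{\rm OMA}\ge R\ (1\le m\le M),\quad P_m\ge0,\quad -\frac{D_{\rm L}}{2}\le x\le\frac{D_{\rm L}}{2}.$$ Then the optimal antenna location is $x^*=\frac{1}{M}\sum_{m=1}^M x_m$ and the optimal powers are $P_m^*=\epsilon(x^*-x_m)^2+\tau_m$, $1\le m\le M$, where $\epsilon=\frac{\sigma^2}{\eta}(e^{MR}-1)$ and $\tau_m=\epsilon(y_m^2+d^2)$.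
   Context: Pinching-antenna system with a single antenna at $(x,0,d)$ on a waveguide at height $d$; users served by TDMA over $M$ slots; $\eta=\frac{c^2}{16\pi^2f_c^2}$, $\sigma^2$ is the noise power, $\log$ is the natural logarithm. *)

theory Defs
  imports Complex_Main
begin

definition R_OMA :: "nat \<Rightarrow> real \<Rightarrow> real \<Rightarrow> real \<Rightarrow> real \<Rightarrow> real \<Rightarrow> real \<Rightarrow> real \<Rightarrow> real" where
  "R_OMA M eta sigma2 Pm x xm ym d =
     (1 / real M) * ln (1 + eta * Pm / (sigma2 * ((x - xm)^2 + ym^2 + d^2)))"

definition feasible :: "nat \<Rightarrow> real \<Rightarrow> real \<Rightarrow> real \<Rightarrow> real \<Rightarrow> real
     \<Rightarrow> (nat \<Rightarrow> real) \<Rightarrow> (nat \<Rightarrow> real) \<Rightarrow> (nat \<Rightarrow> real) \<Rightarrow> real \<Rightarrow> bool" where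
  "feasible M eta sigma2 d DL R xs ys P x \<longleftrightarrow>
     (\<forall>m\<in>{1..M}. R_OMA M eta sigma2 (P m) x (xs m) (ys m) d \<ge> R \<and> P m \<ge> 0)
     \<and> - DL / 2 \<le> x \<and> x \<le> DL / 2"

end

theory Submission
  imports Defs
begin

lemma rate_iff:
  fixes M :: nat and eta s P q R :: real
  assumes "M \<ge> 1" "eta > 0" "s > 0" "q > 0" "P \<ge> 0"
  shows "R \<le> (1 / real M) * ln (1 + eta * P / (s * q)) \<longleftrightarrow>
         s / eta * (exp (real M * R) - 1) * q \<le> P"
proof -
  have M: "real M > 0" using assms by simp
  have a: "eta * P / (s * q) \<ge> 0" using assms by simp
  have "R \<le> (1 / real M) * ln (1 + eta * P / (s * q)) \<longleftrightarrow> real M * R \<le> ln (1 + eta * P / (s * q))"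
    using M by (simp add: field_simps)
  also have "\<dots> \<longleftrightarrow> exp (real M * R) \<le> 1 + eta * P / (s * q)"
    using a by (subst ln_ge_iff) auto
  also have "\<dots> \<longleftrightarrow> exp (real M * R) - 1 \<le> eta * P / (s * q)" by linarith
  also have "\<dots> \<longleftrightarrow> (exp (real M * R) - 1) * (s * q) \<le> eta * P"
    using assms by (simp add: pos_le_divide_eq)
  also have "\<dots> \<longleftrightarrow> s / eta * (exp (real M * R) - 1) * q \<le> P"
    using assms by (simp add: pos_divide_le_eq field_simps)
  finally show ?thesis .
qed

theorem corollary1:
  fixes M :: nat and eta sigma2 d DL DW R :: real and xs ys :: "nat \<Rightarrow> real"
  assumes "M \<ge> 1" and "eta > 0" and "sigma2 > 0" and "d > 0" and "R > 0"
    and "\<forall>m\<in>{1..M}. - DL / 2 \<le> xs m \<and> xs m \<le> DL / 2"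
    and "\<forall>m\<in>{1..M}. - DW / 2 \<le> ys m \<and> ys m \<le> DW / 2"
  defines "xstar \<equiv> (1 / real M) * (\<Sum>m=1..M. xs m)"
    and "eps \<equiv> sigma2 / eta * (exp (real M * R) - 1)"
  defines "Pstar \<equiv> (\<lambda>m. eps * (xstar - xs m)^2 + eps * ((ys m)^2 + d^2))"
  shows "feasible M eta sigma2 d DL R xs ys Pstar xstar
       \<and> (\<forall>P x. feasible M eta sigma2 d DL R xs ys P x \<longrightarrow>
              (\<Sum>m=1..M. Pstar m) \<le> (\<Sum>m=1..M. P m))
       \<and> (\<forall>P x. feasible M eta sigma2 d DL R xs ys P x \<and>
              (\<Sum>m=1..M. P m) = (\<Sum>m=1..M. Pstar m) \<longrightarrow>
              x = xstar \<and> (\<forall>m\<in>{1..M}. P m = Pstar m))"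
proof -
  have Mpos: "real M > 0" using assms(1) by simp
  have "exp (real M * R) > 1" using Mpos assms(5) by simp
  hence epos: "eps > 0" unfolding eps_def using assms(2,3) by simp
  define q where "q = (\<lambda>x m. (x - xs m)^2 + (ys m)^2 + d^2)"
  have qpos: "q x m > 0" for x m unfolding q_def using assms(4)
    by (simp add: add_nonneg_pos)
  have feas: "feasible M eta sigma2 d DL R xs ys P x \<longleftrightarrow>
     (\<forall>m\<in>{1..M}. eps * q x m \<le> P m \<and> P m \<ge> 0) \<and> - DL / 2 \<le> x \<and> x \<le> DL / 2" for P x
  proof -
    have "(R \<le> R_OMA M eta sigma2 (P m) x (xs m) (ys m) d \<and> P m \<ge> 0) \<longleftrightarrow>
          (eps * q x m \<le> P m \<and> P m \<ge> 0)" for m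
      using rate_iff[OF assms(1,2,3) qpos[of x m], of "P m" R]
      unfolding R_OMA_def eps_def q_def by auto
    thus ?thesis unfolding feasible_def by auto
  qed
  have Pq: "Pstar m = eps * q xstar m" for m
    unfolding Pstar_def q_def by (simp add: algebra_simps)
  have sumxs: "(\<Sum>m=1..M. xs m) = real M * xstar" unfolding xstar_def using Mpos by simp
  have lo: "(\<Sum>m=1..M. - DL / 2) \<le> (\<Sum>m=1..M. xs m)" by (rule sum_mono) (use assms(6) in auto)
  have hi: "(\<Sum>m=1..M. xs m) \<le> (\<Sum>m=1..M. DL / 2)" by (rule sum_mono) (use assms(6) in auto)
  have xin: "- DL / 2 \<le> xstar \<and> xstar \<le> DL / 2"
  proof -
    have "real M * (- DL / 2) \<le> real M * xstar" "real M * xstar \<le> real M * (DL / 2)"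
      using lo hi sumxs by auto
    thus ?thesis using Mpos mult_le_cancel_left_pos by blast
  qed
  have decomp: "(\<Sum>m=1..M. q x m) = (\<Sum>m=1..M. q xstar m) + real M * (x - xstar)^2" for x
  proof -
    have "(\<Sum>m=1..M. q x m) = (\<Sum>m=1..M. q xstar m + (x - xstar)^2 + 2 * (x - xstar) * (xstar - xs m))"
      by (rule sum.cong) (auto simp: q_def power2_eq_square algebra_simps)
    also have "\<dots> = (\<Sum>m=1..M. q xstar m) + real M * (x - xstar)^2 + 2 * (x - xstar) * (real M * xstar - (\<Sum>m=1..M. xs m))"
      by (simp add: sum.distrib sum_subtractf sum_distrib_left[symmetric])
    finally show ?thesis using sumxs by simp
  qed
  have part1: "feasible M eta sigma2 d DL R xs ys Pstar xstar"
    unfolding feas using Pq xin epos qpos by (auto intro: less_imp_le)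
  have lower: "(\<Sum>m=1..M. Pstar m) + eps * real M * (x - xstar)^2 \<le> (\<Sum>m=1..M. P m)"
    if f: "feasible M eta sigma2 d DL R xs ys P x" for P x
  proof -
    have "(\<Sum>m=1..M. Pstar m) + eps * real M * (x - xstar)^2 = eps * (\<Sum>m=1..M. q x m)"
      using decomp[of x] by (simp add: Pq sum_distrib_left[symmetric] algebra_simps)
    also have "\<dots> = (\<Sum>m=1..M. eps * q x m)" by (simp add: sum_distrib_left)
    also have "\<dots> \<le> (\<Sum>m=1..M. P m)" by (rule sum_mono) (use f feas in auto)
    finally show ?thesis .
  qed
  have part2: "\<forall>P x. feasible M eta sigma2 d DL R xs ys P x \<longrightarrow>
              (\<Sum>m=1..M. Pstar m) \<le> (\<Sum>m=1..M. P m)"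
  proof (intro allI impI)
    fix P x assume f: "feasible M eta sigma2 d DL R xs ys P x"
    have "0 \<le> eps * real M * (x - xstar)^2" using epos Mpos by simp
    thus "(\<Sum>m=1..M. Pstar m) \<le> (\<Sum>m=1..M. P m)" using lower[OF f] by linarith
  qed
  have part3: "\<forall>P x. feasible M eta sigma2 d DL R xs ys P x \<and>
              (\<Sum>m=1..M. P m) = (\<Sum>m=1..M. Pstar m) \<longrightarrow>
              x = xstar \<and> (\<forall>m\<in>{1..M}. P m = Pstar m)"
  proof (intro allI impI)
    fix P x assume a: "feasible M eta sigma2 d DL R xs ys P x \<and>
              (\<Sum>m=1..M. P m) = (\<Sum>m=1..M. Pstar m)"
    hence f: "feasible M eta sigma2 d DL R xs ys P x" and e: "(\<Sum>m=1..M. P m) = (\<Sum>m=1..M. Pstar m)" by auto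
    have "eps * real M * (x - xstar)^2 \<le> 0" using lower[OF f] e by linarith
    hence "(x - xstar)^2 \<le> 0" using epos Mpos
      by (metis mult_pos_pos mult_le_0_iff not_le zero_le_power2 order_antisym)
    hence xx: "x = xstar" by simp
    have ge: "\<forall>m\<in>{1..M}. Pstar m \<le> P m" using f feas Pq xx by auto
    have "\<forall>m\<in>{1..M}. P m = Pstar m"
    proof -
      have "(\<Sum>m=1..M. P m - Pstar m) = 0" using e by (simp add: sum_subtractf)
      moreover have "\<forall>m\<in>{1..M}. 0 \<le> P m - Pstar m" using ge by auto
      ultimately have "\<forall>m\<in>{1..M}. P m - Pstar m = 0"
        using sum_nonneg_eq_0_iff[of "{1..M}" "\<lambda>m. P m - Pstar m"] by auto
      thus ?thesis by auto
    qed
    thus "x = xstar \<and> (\<forall>m\<in>{1..M}. P m = Pstar m)" using xx by auto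
  qed
  show ?thesis using part1 part2 part3 by blast
qed

end
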